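(* Under the same setting as Lemma 1 (assumptions (A1)–(A4), FedKRSO-SGD iteration, learning rate $0<\eta\le\frac{r}{16Ld_nJ}$), for every round $t$, $$Q^t\le\frac{8J^3\eta^2d_n}{r}\varsigma^2+\frac{8J^3\eta^2d_n}{r}\mathbb{E}\big[\|\nabla F(W^t)\|_F^2\big]+\frac{4J^2d_n^2\eta^2\sigma^2}{r^2},$$ where $Q^t:=\frac1N\sum_{n=1}^N\sum_{j=0}^{J-1}\mathbb{E}\big[\|B^{t,j}_{k(n),n}P^t_{k(n)}\|_F^2\big]$.
   Context: Setting: $N$ clients; each client $n\in[N]$ has a differentiable local objective $F_n:\mathbb{R}^{d_m\times d_n}\to\mathbb{R}$ and the global objective is $F(W)=\frac1N\sum_{n=1}^N F_n(W)$. $\|\cdot\|_F$ is the Frobenius norm. Fix integers $r\ge1$ (rank), $K\ge1$ (number of seeds), $J\ge1$ (local steps), a learning rate $\eta>0$ and an initial matrix $W^0$. FedKRSO-SGD iteration (one interval per round, plain SGD, no momentum): at each round $t=0,1,2,\dots$, random matrices $P^t_1,\dots,P^t_K\in\mathbb{R}^{r\times d_n}$ are drawn, and each client $n$ independently draws an index $k(n)=k(n,t)$ uniformly from $\{1,\dots,K\}$. Client $n$ sets $B^{t,0}_{k(n),n}=0\in\mathbb{R}^{d_m\times r}$ and, for $j=0,\dots,J-1$, with local model $W^{t,j}_n:=W^t+B^{t,j}_{k(n),n}P^t_{k(n)}$, updates $$B^{t,j+1}_{k(n),n}=B^{t,j}_{k(n),n}-\eta\,\hat\nabla f_n(W^{t,j}_n)\,(P^t_{k(n)})^\top,$$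 where $\hat\nabla f_n(W)$ is a stochastic gradient computed on a fresh sample. The next global model is $$W^{t+1}=W^t+\frac1N\sum_{n=1}^N B^{t,J}_{k(n),n}P^t_{k(n)}.$$ Standing assumptions: (A1) ($L$-smoothness) For all $n$ and all $W_1,W_2$: $\|\nabla F_n(W_1)-\nabla F_n(W_2)\|_F\le L\|W_1-W_2\|_F$. (A2) (Stochastic gradients) Conditionally on all past randomness and on the random matrices, $\mathbb{E}[\hat\nabla f_n(W)]=\nabla F_n(W)$ and $\mathbb{E}\|\hat\nabla f_n(W)-\nabla F_n(W)\|_F^2\le\sigma^2$ for all $W$; samples are independent across clients and steps. (A3) (Heterogeneity) There is $\varsigma\ge0$ with $\frac1N\sum_{n=1}^N\|\nabla F_n(W)\|_F^2\le\varsigma^2+\|\nabla F(W)\|_F^2$ for all $W$. (A4) (Random matrices) The matrices $\{P^t_k\}_{k\in[K],t}$ are mutually independent, independent of the data sampling and of the index draws, and each satisfies $P^t_k(P^t_k)^\top=\frac{d_n}{r}I_r$ almost surely and $\mathbb{E}[(P^t_k)^\top P^t_k]=I_{d_n}$. *)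

theory Defs
  imports "HOL-Probability.Probability"
begin

text \<open>Matrices: W :: real^'dn^'dm is a d_m x d_n matrix (rows indexed by 'dm),
  B :: real^'r^'dm is d_m x r, P :: real^'dn^'r is r x d_n; ** is matrix product;
  norm on real^'a^'b is the Frobenius norm, inner product is the Frobenius inner product.\<close>

fun fedkrso_B ::
  "real \<Rightarrow> (nat \<Rightarrow> real^'dn^'dm \<Rightarrow> 's \<Rightarrow> real^'dn^'dm) \<Rightarrow> real^'dn^'dm
     \<Rightarrow> real^'dn^'r \<Rightarrow> (nat \<times> nat \<Rightarrow> 's) \<Rightarrow> nat \<Rightarrow> nat \<Rightarrow> real^'r^'dm" where
  "fedkrso_B eta g W P xi n 0 = 0"
| "fedkrso_B eta g W P xi n (Suc j) =
     fedkrso_B eta g W P xi n j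
     - eta *\<^sub>R (g n (W + fedkrso_B eta g W P xi n j ** P) (xi (n, j)) ** transpose P)"

text \<open>Probability space of one round t: the current global model W^t (arbitrary law muW),
  independent of the fresh randomness of round t: random matrices P_k (laws muP k, k<K),
  uniform index draws k(n) (n<N), and fresh samples xi(n,j) (laws D n j).\<close>
definition round_space ::
  "(real^'dn^'dm) measure \<Rightarrow> (nat \<Rightarrow> (real^'dn^'r) measure) \<Rightarrow> (nat \<Rightarrow> nat \<Rightarrow> 's measure)
     \<Rightarrow> nat \<Rightarrow> nat \<Rightarrow> nat
     \<Rightarrow> ((real^'dn^'dm) \<times> (nat \<Rightarrow> real^'dn^'r) \<times> (nat \<Rightarrow> nat) \<times> (nat \<times> nat \<Rightarrow> 's)) measure" where
  "round_space muW muP D N K J =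
     muW \<Otimes>\<^sub>M (PiM {..<K} muP \<Otimes>\<^sub>M
       (PiM {..<N} (\<lambda>_. measure_pmf (pmf_of_set {..<K})) \<Otimes>\<^sub>M
        PiM ({..<N} \<times> {..<J}) (\<lambda>(n, j). D n j)))"

definition fedkrso_term ::
  "real \<Rightarrow> (nat \<Rightarrow> real^'dn^'dm \<Rightarrow> 's \<Rightarrow> real^'dn^'dm) \<Rightarrow> nat \<Rightarrow> nat
     \<Rightarrow> (real^'dn^'dm) \<times> (nat \<Rightarrow> real^'dn^'r) \<times> (nat \<Rightarrow> nat) \<times> (nat \<times> nat \<Rightarrow> 's) \<Rightarrow> real" where
  "fedkrso_term eta g n j \<omega> = (case \<omega> of (W, Ps, ks, xi) \<Rightarrow>
      (norm (fedkrso_B eta g W (Ps (ks n)) xi n j ** Ps (ks n)))\<^sup>2)"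

end

theory Submission
  imports Defs
begin

lemma mm_rdistrib: "((A::real^'n^'m) + B) ** (C::real^'p^'n) = A ** C + B ** C"
  by (vector matrix_matrix_mult_def sum.distrib[symmetric] field_simps)

lemma mm_bilinear: "bilinear (\<lambda>(A::real^'n^'m) (B::real^'p^'n). A ** B)"
  unfolding bilinear_def
  by (auto intro!: linearI simp: matrix_add_ldistrib mm_rdistrib scalar_matrix_assoc matrix_scalar_ac)

lemma mm_bounded_bilinear: "bounded_bilinear (\<lambda>(A::real^'n^'m) (B::real^'p^'n). A ** B)"
  using mm_bilinear bilinear_conv_bounded_bilinear by blast

lemma inner_mm: "inner ((A::real^'k^'m) ** (B::real^'n^'k)) C = inner A (C ** transpose B)"
  unfolding inner_vec_def matrix_matrix_mult_def transpose_def
  by (simp add: inner_real_def sum_distrib_left sum_distrib_right mult_ac sum.swap[of _ "UNIV::'k set"])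

lemma mm_sub_rdistrib: "((A::real^'n^'m) - B) ** (C::real^'p^'n) = A ** C - B ** C"
  by (vector matrix_matrix_mult_def sum_subtractf[symmetric] field_simps)

locale orthP =
  fixes P :: "real^'dn^'r" and c :: real
  assumes orth: "P ** transpose P = c *\<^sub>R mat 1" and c_nn: "0 \<le> c"
begin

definition "M = transpose P ** P"

lemma M_sym: "transpose M = M"
  unfolding M_def by (simp add: matrix_transpose_mul)

lemma MM: "M ** M = c *\<^sub>R M"
proof -
  have "M ** M = transpose P ** ((P ** transpose P) ** P)"
    unfolding M_def by (simp add: matrix_mul_assoc)
  also have "\<dots> = c *\<^sub>R M" unfolding orth M_def
    by (simp add: matrix_scalar_ac scalar_matrix_assoc[symmetric])
  finally show ?thesis .
qed

lemma normsq_AM: "(norm ((A::real^'dn^'dm) ** M))\<^sup>2 = c * inner A (A ** M)"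
proof -
  have "(norm (A ** M))\<^sup>2 = inner (A ** M) (A ** M)" by (simp add: power2_norm_eq_inner)
  also have "\<dots> = inner A ((A ** M) ** transpose M)" by (rule inner_mm)
  also have "\<dots> = inner A (A ** (M ** M))" by (simp add: M_sym matrix_mul_assoc)
  also have "\<dots> = c * inner A (A ** M)" by (simp add: MM matrix_scalar_ac scalar_matrix_assoc[symmetric])
  finally show ?thesis .
qed

lemma inner_AM: "inner (A::real^'dn^'dm) (A ** M) = (norm (A ** transpose P))\<^sup>2"
proof -
  have "(norm (A ** transpose P))\<^sup>2 = inner (A ** transpose P) (A ** transpose P)"
    by (simp add: power2_norm_eq_inner)
  also have "\<dots> = inner A ((A ** transpose P) ** transpose (transpose P))" by (rule inner_mm)
  also have "\<dots> = inner A (A ** M)" by (simp add: M_def matrix_mul_assoc)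
  finally show ?thesis by simp
qed

lemma norm_AM: "norm ((A::real^'dn^'dm) ** M) \<le> c * norm A"
proof -
  have "(norm (A ** M))\<^sup>2 \<le> c * (norm A * norm (A ** M))"
    unfolding normsq_AM using c_nn Cauchy_Schwarz_ineq2[of A "A ** M"]
    by (intro mult_left_mono) auto
  then have "norm (A ** M) * norm (A ** M) \<le> (c * norm A) * norm (A ** M)"
    by (simp add: power2_eq_square mult_ac)
  then show ?thesis
    by (cases "norm (A ** M) = 0") (auto simp: mult_le_cancel_right c_nn)
qed

end

lemma sq_split: "(norm ((u::'a::real_inner) + v))\<^sup>2 \<le> (1 + 1/J) * (norm u)\<^sup>2 + (1 + J) * (norm v)\<^sup>2"
  if "J > 0" for J :: real
proof -
  have "2 * inner u v \<le> (1/J) * (norm u)\<^sup>2 + J * (norm v)\<^sup>2"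
  proof -
    have "0 \<le> (norm ((1/sqrt J) *\<^sub>R u - sqrt J *\<^sub>R v))\<^sup>2" by simp
    also have "\<dots> = (1/J) * (norm u)\<^sup>2 + J * (norm v)\<^sup>2 - 2 * inner u v"
      using that unfolding power2_norm_eq_inner
      by (simp add: inner_diff_left inner_diff_right inner_commute power2_eq_square real_sqrt_mult[symmetric]  algebra_simps)
    finally show ?thesis by simp
  qed
  then show ?thesis unfolding power2_norm_eq_inner
    by (simp add: inner_add_left inner_add_right inner_commute algebra_simps)
qed

context orthP begin

lemma step_det:
  fixes G :: "real^'dn^'dm \<Rightarrow> real^'dn^'dm" and L eta J :: real
  assumes Lip: "\<forall>W1 W2. norm (G W1 - G W2) \<le> L * norm (W1 - W2)"
    and eta: "0 \<le> eta" and J: "0 < J" and small: "eta * c * L \<le> 1 / (16 * J)"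
  shows "(norm (X - eta *\<^sub>R (G (W + X) ** M)))\<^sup>2
     \<le> (1 + 1/J) * (1 + 1/(16*J))\<^sup>2 * (norm X)\<^sup>2 + (1 + J) * (eta\<^sup>2 * (norm (G W ** M))\<^sup>2)"
proof -
  define u where "u = X - eta *\<^sub>R ((G (W + X) - G W) ** M)"
  define v where "v = - (eta *\<^sub>R (G W ** M))"
  have eq: "X - eta *\<^sub>R (G (W + X) ** M) = u + v"
    unfolding u_def v_def by (simp add: mm_sub_rdistrib scaleR_diff_right algebra_simps)
  have "norm u \<le> norm X + norm (eta *\<^sub>R ((G (W + X) - G W) ** M))"
    unfolding u_def by (rule norm_triangle_ineq4)
  also have "\<dots> = norm X + eta * norm ((G (W + X) - G W) ** M)" using eta by simp
  also have "\<dots> \<le> norm X + eta * (c * norm (G (W + X) - G W))"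
    using norm_AM eta by (intro add_left_mono mult_left_mono) auto
  also have "\<dots> \<le> norm X + eta * (c * (L * norm X))"
    using Lip[rule_format, of "W + X" W] eta c_nn
    by (intro add_left_mono mult_left_mono) auto
  also have "\<dots> = norm X + (eta * c * L) * norm X" by (simp add: mult_ac)
  also have "\<dots> \<le> norm X + (1 / (16 * J)) * norm X"
    using small by (intro add_left_mono mult_right_mono) auto
  also have "\<dots> = (1 + 1/(16*J)) * norm X" by (simp add: algebra_simps)
  finally have nu: "norm u \<le> (1 + 1/(16*J)) * norm X" .
  have nu2: "(norm u)\<^sup>2 \<le> (1 + 1/(16*J))\<^sup>2 * (norm X)\<^sup>2"
    using power_mono[OF nu, of 2] by (simp add: power_mult_distrib)
  have nv2: "(norm v)\<^sup>2 = eta\<^sup>2 * (norm (G W ** M))\<^sup>2"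
    unfolding v_def using eta by (simp add: power_mult_distrib)
  have "(norm (u + v))\<^sup>2 \<le> (1 + 1/J) * (norm u)\<^sup>2 + (1 + J) * (norm v)\<^sup>2"
    using sq_split J by blast
  also have "\<dots> \<le> (1 + 1/J) * ((1 + 1/(16*J))\<^sup>2 * (norm X)\<^sup>2) + (1 + J) * (norm v)\<^sup>2"
    using J nu2 by (intro add_right_mono mult_left_mono) auto
  finally show ?thesis unfolding eq nv2 by (simp add: mult_ac)
qed

lemma bl_lin: fixes A :: "real^'dn^'dm" shows "bounded_linear (\<lambda>Z::real^'dn^'dm. inner A (Z ** M))"
  by (rule bounded_linear_compose[of "inner A" "\<lambda>Z. Z ** M", OF bounded_linear_inner_right bounded_bilinear.bounded_linear_left[OF mm_bounded_bilinear]])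

lemma step_sto:
  fixes D :: "'s measure" and sigma :: real and gs :: "'s \<Rightarrow> real^'dn^'dm"
  assumes D: "prob_space D" and gm: "gs \<in> borel_measurable D" and gi: "integrable D gs"
    and gI: "integral\<^sup>L D gs = G0"
    and var: "(\<integral>\<^sup>+ s. ennreal ((norm (gs s - G0))\<^sup>2) \<partial>D) \<le> ennreal (sigma\<^sup>2)"
  shows "(\<integral>\<^sup>+ s. ennreal ((norm (X - eta *\<^sub>R (gs s ** M)))\<^sup>2) \<partial>D)
     \<le> ennreal ((norm (X - eta *\<^sub>R (G0 ** M)))\<^sup>2 + eta\<^sup>2 * c\<^sup>2 * sigma\<^sup>2)"
proof -
  interpret D: prob_space D by (rule D)
  define A where "A = X - eta *\<^sub>R (G0 ** M)"
  define xi where "xi s = gs s - G0" for s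
  have xim[measurable]: "xi \<in> borel_measurable D" unfolding xi_def using gm by measurable
  have xii: "integrable D xi" unfolding xi_def using gi by auto
  have xiI: "integral\<^sup>L D xi = 0" unfolding xi_def using gi gI by (simp add: D.prob_space)
  have fin: "(\<integral>\<^sup>+ s. ennreal (norm ((norm (xi s))\<^sup>2)) \<partial>D) < \<infinity>"
    using var unfolding xi_def by (simp add: order_le_less_trans)
  have xi2i: "integrable D (\<lambda>s. (norm (xi s))\<^sup>2)"
    by (rule integrableI_bounded) (use fin in auto)
  have xiM2i: "integrable D (\<lambda>s. (norm (xi s ** M))\<^sup>2)"
  proof (rule Bochner_Integration.integrable_bound[OF integrable_mult_right[OF xi2i, of "c\<^sup>2"]])
    show "(\<lambda>s. (norm (xi s ** M))\<^sup>2) \<in> borel_measurable D"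
    proof -
      have cont: "continuous_on UNIV (\<lambda>a::real^'dn^'dm. (norm (a ** M))\<^sup>2)"
        by (intro continuous_on_power continuous_on_norm linear_continuous_on bounded_bilinear.bounded_linear_left[OF mm_bounded_bilinear])
      show ?thesis using borel_measurable_continuous_on[OF cont xim] by simp
    qed
    show "AE x in D. norm ((norm (xi x ** M))\<^sup>2) \<le> norm (c\<^sup>2 * (norm (xi x))\<^sup>2)"
      using norm_AM c_nn by (auto intro!: power_mono simp: power_mult_distrib[symmetric])
  qed
  have lini: "integrable D (\<lambda>s. inner A (xi s ** M))"
    by (rule integrable_bounded_linear[OF bl_lin xii])
  have linI: "(\<integral>s. inner A (xi s ** M) \<partial>D) = 0"
    using integral_bounded_linear[OF bl_lin xii, of A] xiI by simp
  have pt: "(norm (X - eta *\<^sub>R (gs s ** M)))\<^sup>2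
      = (norm A)\<^sup>2 - 2 * eta * inner A (xi s ** M) + eta\<^sup>2 * (norm (xi s ** M))\<^sup>2" for s
  proof -
    have "X - eta *\<^sub>R (gs s ** M) = A - eta *\<^sub>R (xi s ** M)"
      unfolding A_def xi_def by (simp add: mm_sub_rdistrib algebra_simps)
    then have "(norm (X - eta *\<^sub>R (gs s ** M)))\<^sup>2 = (norm (A - eta *\<^sub>R (xi s ** M)))\<^sup>2" by simp
    then show ?thesis unfolding power2_norm_eq_inner
      by (simp add: inner_diff_left inner_diff_right inner_commute power2_eq_square algebra_simps)
  qed
  have fi: "integrable D (\<lambda>s. (norm A)\<^sup>2 - 2 * eta * inner A (xi s ** M) + eta\<^sup>2 * (norm (xi s ** M))\<^sup>2)"
    using lini xiM2i by auto
  have b1: "(\<integral>s. (norm (xi s ** M))\<^sup>2 \<partial>D) \<le> c\<^sup>2 * (\<integral>s. (norm (xi s))\<^sup>2 \<partial>D)"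
  proof -
    have "(\<integral>s. (norm (xi s ** M))\<^sup>2 \<partial>D) \<le> (\<integral>s. c\<^sup>2 * (norm (xi s))\<^sup>2 \<partial>D)"
    proof (rule integral_mono[OF xiM2i integrable_mult_right[OF xi2i]])
      fix s show "(norm (xi s ** M))\<^sup>2 \<le> c\<^sup>2 * (norm (xi s))\<^sup>2"
        using norm_AM c_nn by (auto intro!: power_mono simp: power_mult_distrib[symmetric])
    qed
    then show ?thesis by simp
  qed
  have b2: "(\<integral>s. (norm (xi s))\<^sup>2 \<partial>D) \<le> sigma\<^sup>2"
  proof -
    have "ennreal (\<integral>s. (norm (xi s))\<^sup>2 \<partial>D) = (\<integral>\<^sup>+ s. ennreal ((norm (xi s))\<^sup>2) \<partial>D)"
      by (rule nn_integral_eq_integral[OF xi2i, symmetric]) auto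
    also have "\<dots> \<le> ennreal (sigma\<^sup>2)" using var unfolding xi_def .
    finally show ?thesis by (simp add: ennreal_le_iff)
  qed
  have b3: "eta\<^sup>2 * (\<integral>s. (norm (xi s ** M))\<^sup>2 \<partial>D) \<le> eta\<^sup>2 * (c\<^sup>2 * sigma\<^sup>2)"
    using b1 b2 order_trans[OF b1 mult_left_mono[OF b2, of "c\<^sup>2"]] by (intro mult_left_mono) auto
  have "(\<integral>\<^sup>+ s. ennreal ((norm (X - eta *\<^sub>R (gs s ** M)))\<^sup>2) \<partial>D)
     = (\<integral>\<^sup>+ s. ennreal ((norm A)\<^sup>2 - 2 * eta * inner A (xi s ** M) + eta\<^sup>2 * (norm (xi s ** M))\<^sup>2) \<partial>D)"
    unfolding pt ..
  also have "\<dots> = ennreal (\<integral>s. (norm A)\<^sup>2 - 2 * eta * inner A (xi s ** M) + eta\<^sup>2 * (norm (xi s ** M))\<^sup>2 \<partial>D)"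
    by (rule nn_integral_eq_integral[OF fi]) (auto simp: pt[symmetric])
  also have "(\<integral>s. (norm A)\<^sup>2 - 2 * eta * inner A (xi s ** M) + eta\<^sup>2 * (norm (xi s ** M))\<^sup>2 \<partial>D)
      = (norm A)\<^sup>2 + eta\<^sup>2 * (\<integral>s. (norm (xi s ** M))\<^sup>2 \<partial>D)"
    using lini xiM2i linI by (simp add: D.prob_space)
  also have "ennreal ((norm A)\<^sup>2 + eta\<^sup>2 * (\<integral>s. (norm (xi s ** M))\<^sup>2 \<partial>D)) \<le> ennreal ((norm A)\<^sup>2 + eta\<^sup>2 * (c\<^sup>2 * sigma\<^sup>2))"
    using b3 by (intro ennreal_leI) auto
  finally show ?thesis unfolding A_def by (simp add: mult_ac)
qed

end

lemma mm_meas[measurable (raw)]: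
  fixes A :: "'a \<Rightarrow> real^'n^'m" and B :: "'a \<Rightarrow> real^'p^'n"
  assumes "A \<in> borel_measurable M" "B \<in> borel_measurable M"
  shows "(\<lambda>x. A x ** B x) \<in> borel_measurable M"
  using assms
  by (rule borel_measurable_continuous_Pair)
     (intro bounded_bilinear.continuous_on[OF mm_bounded_bilinear] continuous_intros)

lemma transpose_linear: "linear (transpose :: real^'n^'m \<Rightarrow> real^'m^'n)"
  by (rule linearI) (simp_all add: transpose_def vec_eq_iff)

lemma transpose_meas[measurable (raw)]:
  fixes A :: "'a \<Rightarrow> real^'n^'m"
  assumes "A \<in> borel_measurable M"
  shows "(\<lambda>x. transpose (A x)) \<in> borel_measurable M"
  using borel_measurable_continuous_on[OF linear_continuous_on[OF transpose_linear[unfolded linear_conv_bounded_linear]] assms] .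

lemma B_meas:
  fixes g :: "nat \<Rightarrow> real^'dn^'dm \<Rightarrow> 's \<Rightarrow> real^'dn^'dm"
    and w :: "'a \<Rightarrow> real^'dn^'dm" and p :: "'a \<Rightarrow> real^'dn^'r"
  assumes A2_meas: "\<forall>n<N. \<forall>j<J. (\<lambda>(W, s). g n W s) \<in> borel_measurable (borel \<Otimes>\<^sub>M D n j)"
    and w: "w \<in> borel_measurable M" and p: "p \<in> borel_measurable M"
    and x: "x \<in> M \<rightarrow>\<^sub>M PiM ({..<N} \<times> {..<J}) (\<lambda>(n, j). D n j)" and n: "n < N"
  shows "j \<le> J \<Longrightarrow> (\<lambda>m. fedkrso_B eta g (w m) (p m) (x m) n j) \<in> borel_measurable M"
proof (induction j)
  case 0
  then show ?case by simp
next
  case (Suc j)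
  then have IH: "(\<lambda>m. fedkrso_B eta g (w m) (p m) (x m) n j) \<in> borel_measurable M" by simp
  have j: "j < J" using Suc by simp
  have xc: "(\<lambda>m. x m (n, j)) \<in> M \<rightarrow>\<^sub>M D n j"
    using measurable_compose[OF x measurable_component_singleton[of "(n,j)" "{..<N} \<times> {..<J}" "\<lambda>(n, j). D n j"]] n j
    by simp
  have arg: "(\<lambda>m. (w m + fedkrso_B eta g (w m) (p m) (x m) n j ** p m, x m (n, j))) \<in> M \<rightarrow>\<^sub>M borel \<Otimes>\<^sub>M D n j"
    by (intro measurable_Pair borel_measurable_add w mm_meas IH p xc)
  have gm: "(\<lambda>m. g n (w m + fedkrso_B eta g (w m) (p m) (x m) n j ** p m) (x m (n, j))) \<in> borel_measurable M"
    using measurable_compose[OF arg A2_meas[rule_format, OF n j]] by simp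
  show ?case
    by (simp only: fedkrso_B.simps) (intro borel_measurable_diff borel_measurable_scaleR borel_measurable_const IH mm_meas gm transpose_meas p)
qed

lemma B_dep: "(\<forall>i<j. xi (n, i) = xi' (n, i)) \<Longrightarrow>
   fedkrso_B eta g W P xi n j = fedkrso_B eta g W P xi' n j"
  by (induction j) auto

lemma X_rec: "fedkrso_B eta g W P xi n (Suc j) ** P
   = fedkrso_B eta g W P xi n j ** P
     - eta *\<^sub>R (g n (W + fedkrso_B eta g W P xi n j ** P) (xi (n, j)) ** (transpose P ** P))"
  by (simp add: mm_sub_rdistrib scalar_matrix_assoc[symmetric] matrix_mul_assoc)

locale fed =
  fixes g :: "nat \<Rightarrow> real^'dn^'dm \<Rightarrow> 's \<Rightarrow> real^'dn^'dm"
    and D :: "nat \<Rightarrow> nat \<Rightarrow> 's measure"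
    and gradF :: "nat \<Rightarrow> real^'dn^'dm \<Rightarrow> real^'dn^'dm"
    and N J :: nat and L eta sigma c :: real
  assumes A1: "\<forall>n<N. \<forall>W1 W2. norm (gradF n W1 - gradF n W2) \<le> L * norm (W1 - W2)"
    and A2_prob: "\<forall>n<N. \<forall>j<J. prob_space (D n j)"
    and A2_meas: "\<forall>n<N. \<forall>j<J. (\<lambda>(W, s). g n W s) \<in> borel_measurable (borel \<Otimes>\<^sub>M D n j)"
    and A2_int: "\<forall>n<N. \<forall>j<J. \<forall>W. integrable (D n j) (g n W)"
    and A2_unb: "\<forall>n<N. \<forall>j<J. \<forall>W. (\<integral>s. g n W s \<partial>D n j) = gradF n W"
    and A2_var: "\<forall>n<N. \<forall>j<J. \<forall>W.
        (\<integral>\<^sup>+ s. ennreal ((norm (g n W s - gradF n W))\<^sup>2) \<partial>D n j) \<le> ennreal (sigma\<^sup>2)"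
    and eta_nn: "0 \<le> eta" and c_nn: "0 \<le> c" and J1: "1 \<le> J"
    and small: "eta * c * L \<le> 1 / (16 * real J)"
begin

definition "I = {..<N} \<times> {..<J}"
definition "Dp = (\<lambda>(n, j). D n j)"
definition "Xi = PiM I Dp"
definition "aa = (1 + 1/real J) * (1 + 1/(16*real J))\<^sup>2"

lemma Xi_prob: "prob_space Xi"
  unfolding Xi_def Dp_def I_def using A2_prob by (intro prob_space_PiM) auto

lemma X_meas:
  assumes n: "n < N" and j: "j \<le> J"
  shows "(\<lambda>x. ennreal ((norm (fedkrso_B eta g W P x n j ** P))\<^sup>2)) \<in> borel_measurable Xi"
proof -
  have "(\<lambda>x. fedkrso_B eta g W P x n j) \<in> borel_measurable Xi"
    using B_meas[OF A2_meas, of "\<lambda>_. W" Xi "\<lambda>_. P" "\<lambda>x. x" n j eta] n j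
    unfolding Xi_def Dp_def I_def by simp
  then show ?thesis by measurable
qed

lemma rec_step:
  assumes n: "n < N" and j: "j < J" and orth: "P ** transpose P = c *\<^sub>R mat 1"
  shows "(\<integral>\<^sup>+ x. ennreal ((norm (fedkrso_B eta g W P x n (Suc j) ** P))\<^sup>2) \<partial>Xi)
     \<le> ennreal aa * (\<integral>\<^sup>+ x. ennreal ((norm (fedkrso_B eta g W P x n j ** P))\<^sup>2) \<partial>Xi)
       + ennreal ((1 + real J) * (eta\<^sup>2 * (norm (gradF n W ** (transpose P ** P)))\<^sup>2) + eta\<^sup>2 * c\<^sup>2 * sigma\<^sup>2)"
    (is "?L \<le> ennreal aa * ?E + ennreal ?C")
proof -
  interpret O: orthP P c using orth c_nn by unfold_locales
  define i where "i = (n, j)"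
  define I' where "I' = I - {i}"
  define Dq where "Dq = (\<lambda>k. if k \<in> I then Dp k else count_space {undefined})"
  have Dq_prob: "prob_space (Dq k)" for k
    unfolding Dq_def Dp_def I_def using A2_prob
    by (auto split: prod.splits intro!: prob_spaceI)
  interpret PS: product_sigma_finite Dq
    unfolding product_sigma_finite_def using Dq_prob by (auto intro: prob_space_imp_sigma_finite)
  have iI: "i \<in> I" unfolding i_def I_def using n j by auto
  have fin: "finite I'" "i \<notin> I'" unfolding I'_def I_def by auto
  have XiQ: "Xi = PiM (insert i I') Dq"
    unfolding Xi_def I'_def Dq_def using iI by (intro PiM_cong) auto
  have Dqi: "Dq i = D n j" unfolding Dq_def Dp_def i_def using iI i_def by auto
  interpret Di: prob_space "D n j" using A2_prob n j by auto
  let ?X = "\<lambda>x. fedkrso_B eta g W P x n j ** P"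
  let ?h = "\<lambda>x. ennreal ((norm (?X x))\<^sup>2)"
  have upd: "?X (x(i := y)) = ?X x" for x y
    using B_dep[of j "x(i := y)" n x eta g W P] unfolding i_def by auto
  have mf: "(\<lambda>x. ennreal ((norm (fedkrso_B eta g W P x n (Suc j) ** P))\<^sup>2)) \<in> borel_measurable (PiM (insert i I') Dq)"
    using X_meas[OF n, of "Suc j" W P] j unfolding XiQ by simp
  have mh: "(\<lambda>x. ennreal aa * ?h x + ennreal ?C) \<in> borel_measurable (PiM (insert i I') Dq)"
    using X_meas[OF n, of j W P] j unfolding XiQ by simp
  have "?L = (\<integral>\<^sup>+ x. \<integral>\<^sup>+ y. ennreal ((norm (fedkrso_B eta g W P (x(i := y)) n (Suc j) ** P))\<^sup>2) \<partial>Dq i \<partial>PiM I' Dq)"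
    unfolding XiQ by (rule PS.product_nn_integral_insert[OF fin mf])
  also have "\<dots> \<le> (\<integral>\<^sup>+ x. \<integral>\<^sup>+ y. ennreal aa * ?h (x(i := y)) + ennreal ?C \<partial>Dq i \<partial>PiM I' Dq)"
  proof (rule nn_integral_mono)
    fix x assume "x \<in> space (PiM I' Dq)"
    have gm: "g n (W + ?X x) \<in> borel_measurable (D n j)"
      using measurable_Pair2[OF A2_meas[rule_format, OF n j], of "W + ?X x"] by simp
    have "(\<integral>\<^sup>+ y. ennreal ((norm (fedkrso_B eta g W P (x(i := y)) n (Suc j) ** P))\<^sup>2) \<partial>Dq i)
        = (\<integral>\<^sup>+ y. ennreal ((norm (?X x - eta *\<^sub>R (g n (W + ?X x) y ** O.M)))\<^sup>2) \<partial>D n j)"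
      unfolding Dqi X_rec upd O.M_def by (simp add: i_def)
    also have "\<dots> \<le> ennreal ((norm (?X x - eta *\<^sub>R (gradF n (W + ?X x) ** O.M)))\<^sup>2 + eta\<^sup>2 * c\<^sup>2 * sigma\<^sup>2)"
      using A2_int A2_unb A2_var n j
      by (intro O.step_sto[OF A2_prob[rule_format, OF n j] gm]) auto
    also have "\<dots> \<le> ennreal (aa * (norm (?X x))\<^sup>2 + ?C)"
    proof (intro ennreal_leI add_right_mono)
      have "(norm (?X x - eta *\<^sub>R (gradF n (W + ?X x) ** O.M)))\<^sup>2
         \<le> aa * (norm (?X x))\<^sup>2 + (1 + real J) * (eta\<^sup>2 * (norm (gradF n W ** O.M))\<^sup>2)"
        unfolding aa_def using A1 n eta_nn J1 small
        by (intro O.step_det) auto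
      then show "(norm (?X x - eta *\<^sub>R (gradF n (W + ?X x) ** O.M)))\<^sup>2 + eta\<^sup>2 * c\<^sup>2 * sigma\<^sup>2 \<le> aa * (norm (?X x))\<^sup>2 + ?C"
        unfolding O.M_def by simp
    qed
    also have "\<dots> = (\<integral>\<^sup>+ y. ennreal aa * ?h (x(i := y)) + ennreal ?C \<partial>Dq i)"
      unfolding upd Dqi
      using aa_def by (simp add: Di.emeasure_space_1 ennreal_mult ennreal_plus[symmetric] add_nonneg_nonneg eta_nn)
    finally show "(\<integral>\<^sup>+ y. ennreal ((norm (fedkrso_B eta g W P (x(i := y)) n (Suc j) ** P))\<^sup>2) \<partial>Dq i)
        \<le> (\<integral>\<^sup>+ y. ennreal aa * ?h (x(i := y)) + ennreal ?C \<partial>Dq i)" .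
  qed
  also have "\<dots> = (\<integral>\<^sup>+ x. ennreal aa * ?h x + ennreal ?C \<partial>Xi)"
    unfolding XiQ by (rule PS.product_nn_integral_insert[OF fin mh, symmetric])
  also have "\<dots> = ennreal aa * ?E + ennreal ?C"
    using X_meas[OF n, of j W P] j Xi_prob
    by (simp add: nn_integral_add nn_integral_cmult prob_space.emeasure_space_1)
  finally show ?thesis .
qed

end

lemma aa_le: fixes J :: nat assumes "1 \<le> J"
  shows "(1 + 1/real J) * (1 + 1/(16*real J))\<^sup>2 \<le> 1 + (3/2) / real J"
proof -
  define x where "x = 1 / real J"
  have x0: "0 < x" and x1: "x \<le> 1" unfolding x_def using assms by auto
  have e0: "(1 + 1/real J) * (1 + 1/(16*real J))\<^sup>2 = (1 + x) * (1 + x/16)\<^sup>2"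
    unfolding x_def by simp
  have e: "(1 + 1/real J) * (1 + 1/(16*real J))\<^sup>2 = 1 + x + x/8 + x*x/256 + x*x/8 + x*x*x/256"
    unfolding e0 by (simp add: power2_eq_square field_simps)
  have a: "x * x \<le> x" using x0 x1 by (simp add: mult_le_cancel_left1)
  have b0: "x * x * x \<le> x * x" using mult_right_mono[OF a, of x] x0 by simp
  have b: "x * x * x \<le> x" using b0 a by linarith
  have "1 + x + x/8 + x*x/256 + x*x/8 + x*x*x/256 \<le> 1 + (3/2) * x"
    using a b x0 by linarith
  then show ?thesis unfolding e x_def by simp
qed

lemma aa_pow: fixes J :: nat assumes "1 \<le> J"
  shows "((1 + 1/real J) * (1 + 1/(16*real J))\<^sup>2) ^ J \<le> 8"
proof -
  have "((1 + 1/real J) * (1 + 1/(16*real J))\<^sup>2) ^ J \<le> (1 + (3/2) / real J) ^ J"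
    by (intro power_mono aa_le assms) auto
  also have "\<dots> \<le> (exp ((3/2) / real J)) ^ J"
    by (intro power_mono exp_ge_add_one_self) auto
  also have "\<dots> = exp (3/2)"
    using assms by (simp add: exp_of_nat_mult[symmetric])
  also have "\<dots> \<le> 8"
  proof -
    have "(exp (3/2::real))\<^sup>2 = (exp 1) ^ 3"
      by (simp add: exp_of_nat_mult[symmetric] power2_eq_square exp_add[symmetric])
    also have "\<dots> \<le> 3 ^ 3" by (intro power_mono exp_le) auto
    finally have "(exp (3/2::real))\<^sup>2 \<le> 8\<^sup>2" by simp
    then show ?thesis by (rule power2_le_imp_le) auto
  qed
  finally show ?thesis .
qed

lemma double_sum_bound: fixes J :: nat and a :: real
  assumes "1 \<le> a" "a ^ J \<le> 8"
  shows "(\<Sum>j<J. \<Sum>i<j. a ^ i) \<le> 4 * (real J)\<^sup>2"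
proof -
  have "(\<Sum>i<j. a ^ i) \<le> 8 * real j" if "j < J" for j
  proof -
    have "(\<Sum>i<j. a ^ i) \<le> (\<Sum>i<j. 8)"
    proof (intro sum_mono)
      fix i assume "i \<in> {..<j}"
      then have "a ^ i \<le> a ^ J" using that assms by (intro power_increasing) auto
      then show "a ^ i \<le> 8" using assms by linarith
    qed
    then show ?thesis by simp
  qed
  then have "(\<Sum>j<J. \<Sum>i<j. a ^ i) \<le> (\<Sum>j<J. 8 * real j)" by (intro sum_mono) auto
  also have "(\<Sum>j<J. 8 * real j) \<le> 4 * (real J)\<^sup>2"
    by (induction J) (auto simp: power2_eq_square algebra_simps)
  finally show ?thesis .
qed

context fed begin

lemma aa_ge1: "1 \<le> aa"
proof -
  have h1: "1 \<le> 1 + 1/real J" by simp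
  have h2: "1 \<le> (1 + 1/(16*real J))\<^sup>2" by (rule one_le_power) simp
  from mult_mono[OF h1 h2] show ?thesis unfolding aa_def by simp
qed

lemma iter_bound:
  assumes n: "n < N" and orth: "P ** transpose P = c *\<^sub>R mat 1"
  shows "j \<le> J \<Longrightarrow> (\<integral>\<^sup>+ x. ennreal ((norm (fedkrso_B eta g W P x n j ** P))\<^sup>2) \<partial>Xi)
     \<le> ennreal ((\<Sum>i<j. aa ^ i) * ((1 + real J) * (eta\<^sup>2 * (norm (gradF n W ** (transpose P ** P)))\<^sup>2) + eta\<^sup>2 * c\<^sup>2 * sigma\<^sup>2))"
proof (induction j)
  case 0 then show ?case by simp
next
  case (Suc j)
  let ?C = "(1 + real J) * (eta\<^sup>2 * (norm (gradF n W ** (transpose P ** P)))\<^sup>2) + eta\<^sup>2 * c\<^sup>2 * sigma\<^sup>2"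
  have C0: "0 \<le> ?C" by (auto intro!: add_nonneg_nonneg mult_nonneg_nonneg)
  have a0: "0 \<le> aa" using aa_ge1 by simp
  have "(\<integral>\<^sup>+ x. ennreal ((norm (fedkrso_B eta g W P x n (Suc j) ** P))\<^sup>2) \<partial>Xi)
      \<le> ennreal aa * (\<integral>\<^sup>+ x. ennreal ((norm (fedkrso_B eta g W P x n j ** P))\<^sup>2) \<partial>Xi) + ennreal ?C"
    using Suc by (intro rec_step n orth) auto
  also have "\<dots> \<le> ennreal aa * ennreal ((\<Sum>i<j. aa ^ i) * ?C) + ennreal ?C"
    using Suc by (intro add_right_mono mult_left_mono) auto
  also have "\<dots> = ennreal (aa * ((\<Sum>i<j. aa ^ i) * ?C) + ?C)"
    using a0 C0 by (simp add: ennreal_mult'[symmetric] ennreal_plus[symmetric] sum_nonneg del: ennreal_plus)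
  also have "\<dots> = ennreal ((\<Sum>i<Suc j. aa ^ i) * ?C)"
  proof -
    have S: "(\<Sum>i<Suc j. aa^i) = 1 + aa * (\<Sum>i<j. aa^i)"
      by (subst sum.lessThan_Suc_shift) (simp add: sum_distrib_left del: sum.lessThan_Suc)
    show ?thesis unfolding S by (simp add: algebra_simps)
  qed
  finally show ?case .
qed

end

context fed begin

lemma sumj_bound:
  assumes n: "n < N" and orth: "P ** transpose P = c *\<^sub>R mat 1"
  shows "(\<Sum>j<J. \<integral>\<^sup>+ x. ennreal ((norm (fedkrso_B eta g W P x n j ** P))\<^sup>2) \<partial>Xi)
     \<le> ennreal (4 * (real J)\<^sup>2 * ((1 + real J) * (eta\<^sup>2 * (norm (gradF n W ** (transpose P ** P)))\<^sup>2) + eta\<^sup>2 * c\<^sup>2 * sigma\<^sup>2))"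
proof -
  let ?C = "(1 + real J) * (eta\<^sup>2 * (norm (gradF n W ** (transpose P ** P)))\<^sup>2) + eta\<^sup>2 * c\<^sup>2 * sigma\<^sup>2"
  have C0: "0 \<le> ?C" by (auto intro!: add_nonneg_nonneg mult_nonneg_nonneg)
  have a0: "0 \<le> aa" using aa_ge1 by simp
  have "(\<Sum>j<J. \<integral>\<^sup>+ x. ennreal ((norm (fedkrso_B eta g W P x n j ** P))\<^sup>2) \<partial>Xi)
      \<le> (\<Sum>j<J. ennreal ((\<Sum>i<j. aa ^ i) * ?C))"
    by (intro sum_mono iter_bound[OF n orth]) auto
  also have "\<dots> = ennreal (\<Sum>j<J. (\<Sum>i<j. aa ^ i) * ?C)"
    using a0 C0 by (intro sum_ennreal) (auto intro!: mult_nonneg_nonneg sum_nonneg)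
  also have "\<dots> \<le> ennreal (4 * (real J)\<^sup>2 * ?C)"
  proof (intro ennreal_leI)
    have "(\<Sum>j<J. (\<Sum>i<j. aa ^ i) * ?C) = (\<Sum>j<J. \<Sum>i<j. aa ^ i) * ?C"
      by (simp add: sum_distrib_right)
    also have "\<dots> \<le> 4 * (real J)\<^sup>2 * ?C"
      using double_sum_bound[OF aa_ge1 aa_pow[OF J1, folded aa_def]] C0
      by (intro mult_right_mono) auto
    finally show "(\<Sum>j<J. (\<Sum>i<j. aa ^ i) * ?C) \<le> 4 * (real J)\<^sup>2 * ?C" .
  qed
  finally show ?thesis .
qed

lemma bl_quad: fixes G :: "real^'dn^'dm" shows "bounded_linear (\<lambda>Y::real^'dn^'dn. inner G (G ** Y))"
  by (rule bounded_linear_compose[of "inner G" "\<lambda>Y. G ** Y", OF bounded_linear_inner_right bounded_bilinear.bounded_linear_right[OF mm_bounded_bilinear]])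

lemma P_bound:
  fixes mu :: "(real^'dn^'r) measure"
  assumes n: "n < N" and mu: "prob_space mu" and mus: "sets mu = sets borel"
    and orth: "AE P in mu. P ** transpose P = c *\<^sub>R mat 1"
    and mi: "integrable mu (\<lambda>P. transpose P ** P)" and mI: "(\<integral>P. transpose P ** P \<partial>mu) = mat 1"
  shows "(\<integral>\<^sup>+ P. (\<Sum>j<J. \<integral>\<^sup>+ x. ennreal ((norm (fedkrso_B eta g W P x n j ** P))\<^sup>2) \<partial>Xi) \<partial>mu)
     \<le> ennreal (8 * (real J)^3 * eta\<^sup>2 * c * (norm (gradF n W))\<^sup>2 + 4 * (real J)\<^sup>2 * eta\<^sup>2 * c\<^sup>2 * sigma\<^sup>2)"
proof -
  interpret mu: prob_space mu by (rule mu)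
  let ?G = "gradF n W"
  let ?a = "4 * (real J)\<^sup>2 * (1 + real J) * eta\<^sup>2 * c"
  let ?b = "4 * (real J)\<^sup>2 * eta\<^sup>2 * c\<^sup>2 * sigma\<^sup>2"
  have a0: "0 \<le> ?a" using c_nn by simp
  have "(\<integral>\<^sup>+ P. (\<Sum>j<J. \<integral>\<^sup>+ x. ennreal ((norm (fedkrso_B eta g W P x n j ** P))\<^sup>2) \<partial>Xi) \<partial>mu)
     \<le> (\<integral>\<^sup>+ P. ennreal (?a * inner ?G (?G ** (transpose P ** P)) + ?b) \<partial>mu)"
  proof (rule nn_integral_mono_AE)
    show "AE P in mu. (\<Sum>j<J. \<integral>\<^sup>+ x. ennreal ((norm (fedkrso_B eta g W P x n j ** P))\<^sup>2) \<partial>Xi)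
       \<le> ennreal (?a * inner ?G (?G ** (transpose P ** P)) + ?b)"
      using orth
    proof eventually_elim
      case (elim P)
      interpret O: orthP P c using elim c_nn by unfold_locales
      have "(norm (?G ** (transpose P ** P)))\<^sup>2 = c * inner ?G (?G ** (transpose P ** P))"
        using O.normsq_AM unfolding O.M_def .
      then show ?case using sumj_bound[OF n elim, of W]
        by (simp add: algebra_simps)
    qed
  qed
  also have "\<dots> = ennreal (\<integral>P. ?a * inner ?G (?G ** (transpose P ** P)) + ?b \<partial>mu)"
  proof (rule nn_integral_eq_integral)
    show "integrable mu (\<lambda>P. ?a * inner ?G (?G ** (transpose P ** P)) + ?b)"
      using integrable_bounded_linear[OF bl_quad mi] by auto
    show "AE P in mu. 0 \<le> ?a * inner ?G (?G ** (transpose P ** P)) + ?b"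
      using orth
    proof eventually_elim
      case (elim P)
      interpret O: orthP P c using elim c_nn by unfold_locales
      have "inner ?G (?G ** (transpose P ** P)) = (norm (?G ** transpose P))\<^sup>2"
        using O.inner_AM[of ?G] unfolding O.M_def .
      then have "0 \<le> inner ?G (?G ** (transpose P ** P))" by simp
      then show ?case using a0 by (auto intro!: add_nonneg_nonneg mult_nonneg_nonneg)
    qed
  qed
  also have "(\<integral>P. ?a * inner ?G (?G ** (transpose P ** P)) + ?b \<partial>mu) = ?a * (norm ?G)\<^sup>2 + ?b"
  proof -
    have "(\<integral>P. inner ?G (?G ** (transpose P ** P)) \<partial>mu) = inner ?G (?G ** mat 1)"
      using integral_bounded_linear[OF bl_quad mi, of ?G] mI by simp
    then show ?thesis
      using integrable_bounded_linear[OF bl_quad mi, of ?G]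
      by (simp add: mu.prob_space power2_norm_eq_inner)
  qed
  also have "ennreal (?a * (norm ?G)\<^sup>2 + ?b) \<le> ennreal (8 * (real J)^3 * eta\<^sup>2 * c * (norm ?G)\<^sup>2 + ?b)"
  proof (intro ennreal_leI add_right_mono)
    have "?a \<le> 8 * (real J)^3 * eta\<^sup>2 * c"
    proof -
      have "4 * (real J)\<^sup>2 * (1 + real J) \<le> 8 * (real J)^3"
        using J1 by (simp add: power2_eq_square power3_eq_cube algebra_simps)
      then have "(4 * (real J)\<^sup>2 * (1 + real J)) * (eta\<^sup>2 * c) \<le> (8 * (real J)^3) * (eta\<^sup>2 * c)"
        by (rule mult_right_mono) (use c_nn in simp)
      then show ?thesis by (simp add: mult_ac)
    qed
    then show "?a * (norm ?G)\<^sup>2 \<le> 8 * (real J)^3 * eta\<^sup>2 * c * (norm ?G)\<^sup>2"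
      by (rule mult_right_mono) auto
  qed
  finally show ?thesis .
qed

end

lemma nn_integral_component:
  assumes M: "\<And>i. i \<in> I \<Longrightarrow> prob_space (M i)" and i: "i \<in> I" and f: "f \<in> borel_measurable (M i)"
  shows "(\<integral>\<^sup>+ x. f (x i) \<partial>PiM I M) = (\<integral>\<^sup>+ y. f y \<partial>M i)"
proof -
  have "(\<integral>\<^sup>+ y. f y \<partial>distr (PiM I M) (M i) (\<lambda>x. x i)) = (\<integral>\<^sup>+ x. f (x i) \<partial>PiM I M)"
    by (rule nn_integral_distr) (use i f distr_PiM_component[of I M i, OF M i] in auto)
  then show ?thesis using distr_PiM_component[of I M i, OF M i] by simp
qed

lemma meas_to_borel: "f \<in> M \<rightarrow>\<^sub>M N \<Longrightarrow> sets N = sets borel \<Longrightarrow> f \<in> borel_measurable M"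
  using measurable_cong_sets[OF refl, of N borel M] by blast

lemma meas_from_borel: "f \<in> borel_measurable borel \<Longrightarrow> sets N = sets borel \<Longrightarrow> f \<in> borel_measurable N"
  using measurable_cong_sets[of N borel borel borel] by blast

lemma sel_meas:
  fixes muW :: "(real^'dn^'dm) measure" and muP :: "nat \<Rightarrow> (real^'dn^'r) measure"
    and Xi :: "'x measure" and H :: "real^'dn^'dm \<Rightarrow> real^'dn^'r \<Rightarrow> 'x \<Rightarrow> ennreal"
  assumes W: "prob_space muW" "sets muW = sets borel"
    and P: "\<forall>k<K. prob_space (muP k) \<and> sets (muP k) = sets borel" and K: "1 \<le> K"
    and Xi: "prob_space Xi" and n: "n < N"
    and Hm: "(\<lambda>(W, P, x). H W P x) \<in> borel_measurable (borel \<Otimes>\<^sub>M (borel \<Otimes>\<^sub>M Xi))"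
  shows "(\<lambda>\<omega>. H (fst \<omega>) (fst (snd \<omega>) (fst (snd (snd \<omega>)) n)) (snd (snd (snd \<omega>))))
     \<in> borel_measurable (muW \<Otimes>\<^sub>M (PiM {..<K} muP \<Otimes>\<^sub>M (PiM {..<N} (\<lambda>_. measure_pmf (pmf_of_set {..<K})) \<Otimes>\<^sub>M Xi)))"
proof -
  define U where "U = measure_pmf (pmf_of_set {..<K})"
  define PK where "PK = PiM {..<K} muP"
  define KS where "KS = PiM {..<N} (\<lambda>_. U)"
  interpret Xi: prob_space Xi by (rule Xi)
  have PK_prob: "prob_space PK" unfolding PK_def using P by (intro prob_space_PiM) auto
  have KS_prob: "prob_space KS" unfolding KS_def U_def by (intro prob_space_PiM prob_space_measure_pmf)
  interpret PK: prob_space PK by (rule PK_prob)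
  interpret KS: prob_space KS by (rule KS_prob)
  interpret KX: pair_prob_space KS Xi by unfold_locales
  have KX_prob: "prob_space (KS \<Otimes>\<^sub>M Xi)" by unfold_locales
  interpret PKX: pair_prob_space PK "KS \<Otimes>\<^sub>M Xi" by unfold_locales
  have R_prob: "prob_space (PK \<Otimes>\<^sub>M (KS \<Otimes>\<^sub>M Xi))" by unfold_locales
  interpret RR: prob_space "PK \<Otimes>\<^sub>M (KS \<Otimes>\<^sub>M Xi)" by (rule R_prob)
  let ?f = "\<lambda>\<omega>. H (fst \<omega>) (fst (snd \<omega>) (fst (snd (snd \<omega>)) n)) (snd (snd (snd \<omega>)))"
  have Psel: "(\<lambda>\<omega>. fst \<omega> (fst (snd \<omega>) n)) \<in> borel_measurable (PK \<Otimes>\<^sub>M (KS \<Otimes>\<^sub>M Xi))"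
  proof (rule measurable_compose_countable[where f="\<lambda>i \<omega>. fst \<omega> i"])
    fix i
    show "(\<lambda>\<omega>. fst \<omega> i) \<in> borel_measurable (PK \<Otimes>\<^sub>M (KS \<Otimes>\<^sub>M Xi))"
    proof (cases "i < K")
      case True
      have "(\<lambda>Ps. Ps i) \<in> PK \<rightarrow>\<^sub>M muP i" unfolding PK_def
        using True by (intro measurable_component_singleton) auto
      then have "(\<lambda>Ps. Ps i) \<in> borel_measurable PK"
        by (rule meas_to_borel) (use P True in auto)
      from measurable_compose[OF measurable_fst[of PK "KS \<Otimes>\<^sub>M Xi"] this] show ?thesis by (simp add: o_def)
    next
      case False
      have eq: "\<And>\<omega>. \<omega> \<in> space (PK \<Otimes>\<^sub>M (KS \<Otimes>\<^sub>M Xi)) \<Longrightarrow> fst \<omega> i = undefined"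
        using False by (auto simp: space_pair_measure PK_def space_PiM PiE_def extensional_def)
      show ?thesis by (subst measurable_cong[OF eq]) simp_all
    qed
  next
    have "(\<lambda>ks. ks n) \<in> KS \<rightarrow>\<^sub>M U" unfolding KS_def using n by (intro measurable_component_singleton) auto
    moreover have "(\<lambda>k. k) \<in> U \<rightarrow>\<^sub>M count_space UNIV" unfolding U_def by simp
    ultimately have "(\<lambda>ks. ks n) \<in> KS \<rightarrow>\<^sub>M count_space UNIV" by (rule measurable_compose)
    from measurable_compose[OF measurable_compose[OF measurable_snd[of PK "KS \<Otimes>\<^sub>M Xi"] measurable_fst[of KS Xi]] this]
    show "(\<lambda>\<omega>. fst (snd \<omega>) n) \<in> PK \<Otimes>\<^sub>M (KS \<Otimes>\<^sub>M Xi) \<rightarrow>\<^sub>M count_space UNIV" by (simp add: o_def)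
  qed
  have fR: "(\<lambda>r. H W (fst r (fst (snd r) n)) (snd (snd r))) \<in> borel_measurable (PK \<Otimes>\<^sub>M (KS \<Otimes>\<^sub>M Xi))" for W
  proof -
    have "(\<lambda>r. (W, fst r (fst (snd r) n), snd (snd r))) \<in> (PK \<Otimes>\<^sub>M (KS \<Otimes>\<^sub>M Xi)) \<rightarrow>\<^sub>M (borel \<Otimes>\<^sub>M (borel \<Otimes>\<^sub>M Xi))"
      by (intro measurable_Pair measurable_const Psel measurable_compose[OF measurable_snd measurable_snd]) auto
    from measurable_compose[OF this Hm] show ?thesis by simp
  qed
  have fm: "?f \<in> borel_measurable (muW \<Otimes>\<^sub>M (PK \<Otimes>\<^sub>M (KS \<Otimes>\<^sub>M Xi)))"
  proof -
    have "(\<lambda>\<omega>. snd \<omega>) \<in> (muW \<Otimes>\<^sub>M (PK \<Otimes>\<^sub>M (KS \<Otimes>\<^sub>M Xi))) \<rightarrow>\<^sub>M (PK \<Otimes>\<^sub>M (KS \<Otimes>\<^sub>M Xi))" by (rule measurable_snd)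
    from measurable_compose[OF this Psel]
    have "(\<lambda>\<omega>. fst (snd \<omega>) (fst (snd (snd \<omega>)) n)) \<in> borel_measurable (muW \<Otimes>\<^sub>M (PK \<Otimes>\<^sub>M (KS \<Otimes>\<^sub>M Xi)))" by simp
    then have "(\<lambda>\<omega>. (fst \<omega>, fst (snd \<omega>) (fst (snd (snd \<omega>)) n), snd (snd (snd \<omega>)))) \<in> (muW \<Otimes>\<^sub>M (PK \<Otimes>\<^sub>M (KS \<Otimes>\<^sub>M Xi))) \<rightarrow>\<^sub>M (borel \<Otimes>\<^sub>M (borel \<Otimes>\<^sub>M Xi))"
      using W(2) by (intro measurable_Pair) (auto simp: measurable_cong_sets[OF W(2)[symmetric] refl])
    from measurable_compose[OF this Hm] show ?thesis by simp
  qed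
  show ?thesis using fm unfolding PK_def KS_def U_def .
qed

lemma decomp:
  fixes muW :: "(real^'dn^'dm) measure" and muP :: "nat \<Rightarrow> (real^'dn^'r) measure"
    and Xi :: "'x measure" and H :: "real^'dn^'dm \<Rightarrow> real^'dn^'r \<Rightarrow> 'x \<Rightarrow> ennreal"
  assumes W: "prob_space muW" "sets muW = sets borel"
    and P: "\<forall>k<K. prob_space (muP k) \<and> sets (muP k) = sets borel" and K: "1 \<le> K"
    and Xi: "prob_space Xi" and n: "n < N"
    and Hm: "(\<lambda>(W, P, x). H W P x) \<in> borel_measurable (borel \<Otimes>\<^sub>M (borel \<Otimes>\<^sub>M Xi))"
    and bound: "\<forall>W. \<forall>k<K. (\<integral>\<^sup>+ P. \<integral>\<^sup>+ x. H W P x \<partial>Xi \<partial>muP k) \<le> R W"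
  shows "(\<integral>\<^sup>+ \<omega>. H (fst \<omega>) (fst (snd \<omega>) (fst (snd (snd \<omega>)) n)) (snd (snd (snd \<omega>)))
     \<partial>(muW \<Otimes>\<^sub>M (PiM {..<K} muP \<Otimes>\<^sub>M (PiM {..<N} (\<lambda>_. measure_pmf (pmf_of_set {..<K})) \<Otimes>\<^sub>M Xi))))
     \<le> (\<integral>\<^sup>+ W. R W \<partial>muW)"
proof -
  define U where "U = measure_pmf (pmf_of_set {..<K})"
  define PK where "PK = PiM {..<K} muP"
  define KS where "KS = PiM {..<N} (\<lambda>_. U)"
  interpret Xi: prob_space Xi by (rule Xi)
  have PK_prob: "prob_space PK" unfolding PK_def using P by (intro prob_space_PiM) auto
  have KS_prob: "prob_space KS" unfolding KS_def U_def by (intro prob_space_PiM prob_space_measure_pmf)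
  interpret PK: prob_space PK by (rule PK_prob)
  interpret KS: prob_space KS by (rule KS_prob)
  interpret KX: pair_prob_space KS Xi by unfold_locales
  have KX_prob: "prob_space (KS \<Otimes>\<^sub>M Xi)" by unfold_locales
  interpret PKX: pair_prob_space PK "KS \<Otimes>\<^sub>M Xi" by unfold_locales
  have R_prob: "prob_space (PK \<Otimes>\<^sub>M (KS \<Otimes>\<^sub>M Xi))" by unfold_locales
  interpret RR: prob_space "PK \<Otimes>\<^sub>M (KS \<Otimes>\<^sub>M Xi)" by (rule R_prob)
  let ?f = "\<lambda>\<omega>. H (fst \<omega>) (fst (snd \<omega>) (fst (snd (snd \<omega>)) n)) (snd (snd (snd \<omega>)))"
  have Psel: "(\<lambda>\<omega>. fst \<omega> (fst (snd \<omega>) n)) \<in> borel_measurable (PK \<Otimes>\<^sub>M (KS \<Otimes>\<^sub>M Xi))"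
  proof (rule measurable_compose_countable[where f="\<lambda>i \<omega>. fst \<omega> i"])
    fix i
    show "(\<lambda>\<omega>. fst \<omega> i) \<in> borel_measurable (PK \<Otimes>\<^sub>M (KS \<Otimes>\<^sub>M Xi))"
    proof (cases "i < K")
      case True
      have "(\<lambda>Ps. Ps i) \<in> PK \<rightarrow>\<^sub>M muP i" unfolding PK_def
        using True by (intro measurable_component_singleton) auto
      then have "(\<lambda>Ps. Ps i) \<in> borel_measurable PK"
        by (rule meas_to_borel) (use P True in auto)
      from measurable_compose[OF measurable_fst[of PK "KS \<Otimes>\<^sub>M Xi"] this] show ?thesis by (simp add: o_def)
    next
      case False
      have eq: "\<And>\<omega>. \<omega> \<in> space (PK \<Otimes>\<^sub>M (KS \<Otimes>\<^sub>M Xi)) \<Longrightarrow> fst \<omega> i = undefined"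
        using False by (auto simp: space_pair_measure PK_def space_PiM PiE_def extensional_def)
      show ?thesis by (subst measurable_cong[OF eq]) simp_all
    qed
  next
    have "(\<lambda>ks. ks n) \<in> KS \<rightarrow>\<^sub>M U" unfolding KS_def using n by (intro measurable_component_singleton) auto
    moreover have "(\<lambda>k. k) \<in> U \<rightarrow>\<^sub>M count_space UNIV" unfolding U_def by simp
    ultimately have "(\<lambda>ks. ks n) \<in> KS \<rightarrow>\<^sub>M count_space UNIV" by (rule measurable_compose)
    from measurable_compose[OF measurable_compose[OF measurable_snd[of PK "KS \<Otimes>\<^sub>M Xi"] measurable_fst[of KS Xi]] this]
    show "(\<lambda>\<omega>. fst (snd \<omega>) n) \<in> PK \<Otimes>\<^sub>M (KS \<Otimes>\<^sub>M Xi) \<rightarrow>\<^sub>M count_space UNIV" by (simp add: o_def)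
  qed
  have fR: "(\<lambda>r. H W (fst r (fst (snd r) n)) (snd (snd r))) \<in> borel_measurable (PK \<Otimes>\<^sub>M (KS \<Otimes>\<^sub>M Xi))" for W
  proof -
    have "(\<lambda>r. (W, fst r (fst (snd r) n), snd (snd r))) \<in> (PK \<Otimes>\<^sub>M (KS \<Otimes>\<^sub>M Xi)) \<rightarrow>\<^sub>M (borel \<Otimes>\<^sub>M (borel \<Otimes>\<^sub>M Xi))"
      by (intro measurable_Pair measurable_const Psel measurable_compose[OF measurable_snd measurable_snd]) auto
    from measurable_compose[OF this Hm] show ?thesis by simp
  qed
  have fm: "?f \<in> borel_measurable (muW \<Otimes>\<^sub>M (PK \<Otimes>\<^sub>M (KS \<Otimes>\<^sub>M Xi)))"
  proof -
    have "(\<lambda>\<omega>. snd \<omega>) \<in> (muW \<Otimes>\<^sub>M (PK \<Otimes>\<^sub>M (KS \<Otimes>\<^sub>M Xi))) \<rightarrow>\<^sub>M (PK \<Otimes>\<^sub>M (KS \<Otimes>\<^sub>M Xi))" by (rule measurable_snd)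
    from measurable_compose[OF this Psel]
    have "(\<lambda>\<omega>. fst (snd \<omega>) (fst (snd (snd \<omega>)) n)) \<in> borel_measurable (muW \<Otimes>\<^sub>M (PK \<Otimes>\<^sub>M (KS \<Otimes>\<^sub>M Xi)))" by simp
    then have "(\<lambda>\<omega>. (fst \<omega>, fst (snd \<omega>) (fst (snd (snd \<omega>)) n), snd (snd (snd \<omega>)))) \<in> (muW \<Otimes>\<^sub>M (PK \<Otimes>\<^sub>M (KS \<Otimes>\<^sub>M Xi))) \<rightarrow>\<^sub>M (borel \<Otimes>\<^sub>M (borel \<Otimes>\<^sub>M Xi))"
      using W(2) by (intro measurable_Pair) (auto simp: measurable_cong_sets[OF W(2)[symmetric] refl])
    from measurable_compose[OF this Hm] show ?thesis by simp
  qed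
  have "(\<integral>\<^sup>+ \<omega>. ?f \<omega> \<partial>(muW \<Otimes>\<^sub>M (PK \<Otimes>\<^sub>M (KS \<Otimes>\<^sub>M Xi))))
      = (\<integral>\<^sup>+ W. \<integral>\<^sup>+ r. H W (fst r (fst (snd r) n)) (snd (snd r)) \<partial>(PK \<Otimes>\<^sub>M (KS \<Otimes>\<^sub>M Xi)) \<partial>muW)"
    using PKX.P.nn_integral_fst[OF fm] by simp
  also have "\<dots> \<le> (\<integral>\<^sup>+ W. R W \<partial>muW)"
  proof (rule nn_integral_mono)
    fix W
    have HW: "(\<lambda>(P, x). H W P x) \<in> borel_measurable (borel \<Otimes>\<^sub>M Xi)"
      using measurable_Pair2[OF Hm, of W] by (simp add: split_beta')
    define G where "G P = (\<integral>\<^sup>+ x. H W P x \<partial>Xi)" for P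
    have Gm: "G \<in> borel_measurable borel"
      unfolding G_def using Xi.borel_measurable_nn_integral[OF HW] .
    have GPk: "(\<lambda>Ps. G (Ps k)) \<in> borel_measurable PK" if "k < K" for k
    proof -
      have "(\<lambda>Ps. Ps k) \<in> PK \<rightarrow>\<^sub>M muP k" unfolding PK_def
        using that by (intro measurable_component_singleton) auto
      then have "(\<lambda>Ps. Ps k) \<in> PK \<rightarrow>\<^sub>M borel"
        by (rule meas_to_borel) (use P that in auto)
      from measurable_compose[OF this Gm] show ?thesis .
    qed
    have "(\<integral>\<^sup>+ r. H W (fst r (fst (snd r) n)) (snd (snd r)) \<partial>(PK \<Otimes>\<^sub>M (KS \<Otimes>\<^sub>M Xi)))
        = (\<integral>\<^sup>+ Ps. \<integral>\<^sup>+ q. H W (Ps (fst q n)) (snd q) \<partial>(KS \<Otimes>\<^sub>M Xi) \<partial>PK)"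
      using KX.P.nn_integral_fst[OF fR[of W]] by simp
    also have "\<dots> = (\<integral>\<^sup>+ Ps. (\<Sum>k<K. G (Ps k)) / of_nat K \<partial>PK)"
    proof (rule nn_integral_cong)
      fix Ps assume Ps: "Ps \<in> space PK"
      have qm: "(\<lambda>q. H W (Ps (fst q n)) (snd q)) \<in> borel_measurable (KS \<Otimes>\<^sub>M Xi)"
        using measurable_Pair2[OF fR[of W] Ps] by simp
      have "(\<integral>\<^sup>+ q. H W (Ps (fst q n)) (snd q) \<partial>(KS \<Otimes>\<^sub>M Xi)) = (\<integral>\<^sup>+ ks. \<integral>\<^sup>+ x. H W (Ps (ks n)) x \<partial>Xi \<partial>KS)"
        using Xi.nn_integral_fst[OF qm] by simp
      also have "\<dots> = (\<integral>\<^sup>+ ks. G (Ps (ks n)) \<partial>KS)" unfolding G_def ..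
      also have "\<dots> = (\<integral>\<^sup>+ k. G (Ps k) \<partial>U)"
        unfolding KS_def using n by (intro nn_integral_component) (auto simp: U_def prob_space_measure_pmf)
      also have "\<dots> = (\<Sum>k<K. G (Ps k)) / of_nat K"
        unfolding U_def using K by (subst nn_integral_pmf_of_set) (auto simp: lessThan_empty_iff)
      finally show "(\<integral>\<^sup>+ q. H W (Ps (fst q n)) (snd q) \<partial>(KS \<Otimes>\<^sub>M Xi)) = (\<Sum>k<K. G (Ps k)) / of_nat K" .
    qed
    also have "\<dots> = (\<integral>\<^sup>+ Ps. (\<Sum>k<K. G (Ps k)) \<partial>PK) / of_nat K"
      using GPk by (subst nn_integral_divide) (auto intro!: borel_measurable_sum)
    also have "\<dots> = (\<Sum>k<K. \<integral>\<^sup>+ Ps. G (Ps k) \<partial>PK) / of_nat K"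
      using GPk by (subst nn_integral_sum) auto
    also have "\<dots> = (\<Sum>k<K. \<integral>\<^sup>+ P. G P \<partial>muP k) / of_nat K"
    proof -
      have "(\<integral>\<^sup>+ Ps. G (Ps k) \<partial>PK) = (\<integral>\<^sup>+ P. G P \<partial>muP k)" if "k < K" for k
        unfolding PK_def using P that Gm
        by (intro nn_integral_component) (auto intro: meas_from_borel[OF Gm])
      then show ?thesis by simp
    qed
    also have "\<dots> \<le> (\<Sum>k<K. R W) / of_nat K"
      using bound unfolding G_def by (intro divide_right_mono_ennreal sum_mono) auto
    also have "\<dots> = R W"
    proof -
      have "(\<Sum>k<K. R W) / of_nat K = of_nat K * R W / of_nat K" by simp
      also have "\<dots> = R W"
        using K by (metis ennreal_mult_divide_eq mult.commute not_one_le_zero of_nat_eq_0_iff ennreal_of_nat_neq_top)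
      finally show ?thesis .
    qed
    finally show "(\<integral>\<^sup>+ r. H W (fst r (fst (snd r) n)) (snd (snd r)) \<partial>(PK \<Otimes>\<^sub>M (KS \<Otimes>\<^sub>M Xi))) \<le> R W" .
  qed
  finally show ?thesis unfolding PK_def KS_def U_def .
qed

lemma gradFg_eq:
  fixes Fn :: "nat \<Rightarrow> real^'dn^'dm \<Rightarrow> real"
  assumes grad: "\<forall>n<N. \<forall>W. (Fn n has_derivative (\<lambda>H. gradF n W \<bullet> H)) (at W)"
    and gradg: "\<forall>W. ((\<lambda>V. (\<Sum>n<N. Fn n V) / real N) has_derivative (\<lambda>H. gradFg W \<bullet> H)) (at W)"
    and N: "1 \<le> N"
  shows "gradFg W = (1 / real N) *\<^sub>R (\<Sum>n<N. gradF n W)"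
proof -
  have d: "((\<lambda>V. (\<Sum>n<N. Fn n V) / real N) has_derivative (\<lambda>H. (\<Sum>n<N. gradF n W \<bullet> H) / real N)) (at W)"
    using grad N by (auto intro!: derivative_eq_intros)
  have "(\<lambda>H. gradFg W \<bullet> H) = (\<lambda>H. (\<Sum>n<N. gradF n W \<bullet> H) / real N)"
    using has_derivative_unique[OF gradg[rule_format] d] .
  then have e: "gradFg W \<bullet> H = ((1 / real N) *\<^sub>R (\<Sum>n<N. gradF n W)) \<bullet> H" for H
    by (drule_tac fun_cong[of _ _ H]) (simp add: inner_sum_left)
  have "(gradFg W - (1 / real N) *\<^sub>R (\<Sum>n<N. gradF n W)) \<bullet> (gradFg W - (1 / real N) *\<^sub>R (\<Sum>n<N. gradF n W)) = 0"
    using e by (simp add: inner_diff_left)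
  then show ?thesis by simp
qed

lemma lip_cont:
  fixes f :: "'a::real_normed_vector \<Rightarrow> 'b::real_normed_vector"
  assumes "\<forall>W1 W2. norm (f W1 - f W2) \<le> L * norm (W1 - W2)" "0 < L"
  shows "continuous_on UNIV f"
proof (rule lipschitz_on_continuous_on)
  show "L-lipschitz_on UNIV f"
    using assms by (intro lipschitz_onI) (auto simp: dist_norm)
qed

lemma marginal:
  assumes Q: "prob_space Q" and f: "f \<in> borel_measurable M"
  shows "(\<integral>\<^sup>+ \<omega>. f (fst \<omega>) \<partial>(M \<Otimes>\<^sub>M Q)) = (\<integral>\<^sup>+ W. f W \<partial>M)"
proof -
  interpret Q: prob_space Q by (rule Q)
  have "(\<lambda>\<omega>. f (fst \<omega>)) \<in> borel_measurable (M \<Otimes>\<^sub>M Q)" using f by measurable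
  from Q.nn_integral_fst[OF this, symmetric] show ?thesis by (simp add: Q.emeasure_space_1)
qed

context fed begin

lemma Hj_meas:
  assumes n: "n < N" and j: "j \<le> J"
  shows "(\<lambda>z. ennreal ((norm (fedkrso_B eta g (fst z) (fst (snd z)) (snd (snd z)) n j ** fst (snd z)))\<^sup>2))
     \<in> borel_measurable (borel \<Otimes>\<^sub>M (borel \<Otimes>\<^sub>M Xi))"
proof -
  have x: "(\<lambda>z. snd (snd z)) \<in> (borel \<Otimes>\<^sub>M (borel \<Otimes>\<^sub>M Xi)) \<rightarrow>\<^sub>M PiM ({..<N} \<times> {..<J}) (\<lambda>(n, j). D n j)"
    unfolding Xi_def I_def Dp_def by measurable
  have p: "(\<lambda>z. fst (snd z)) \<in> borel_measurable (borel \<Otimes>\<^sub>M (borel \<Otimes>\<^sub>M Xi))" by measurable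
  have w: "(\<lambda>z. fst z) \<in> borel_measurable (borel \<Otimes>\<^sub>M (borel \<Otimes>\<^sub>M Xi))" by measurable
  have "(\<lambda>z. fedkrso_B eta g (fst z) (fst (snd z)) (snd (snd z)) n j) \<in> borel_measurable (borel \<Otimes>\<^sub>M (borel \<Otimes>\<^sub>M Xi))"
    by (rule B_meas[OF A2_meas w p x n j])
  then show ?thesis using p by measurable
qed

end

theorem lemma2:
  fixes Fn :: "nat \<Rightarrow> real^'dn^'dm \<Rightarrow> real"
    and gradF :: "nat \<Rightarrow> real^'dn^'dm \<Rightarrow> real^'dn^'dm"
    and gradFg :: "real^'dn^'dm \<Rightarrow> real^'dn^'dm"
    and g :: "nat \<Rightarrow> real^'dn^'dm \<Rightarrow> 's \<Rightarrow> real^'dn^'dm"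
    and D :: "nat \<Rightarrow> nat \<Rightarrow> 's measure"
    and muW :: "(real^'dn^'dm) measure"
    and muP :: "nat \<Rightarrow> (real^'dn^'r) measure"
    and N K J :: nat
    and L eta sigma vsig :: real
  assumes N: "N \<ge> 1" and K: "K \<ge> 1" and J: "J \<ge> 1"
    and grad: "\<forall>n<N. \<forall>W. (Fn n has_derivative (\<lambda>H. gradF n W \<bullet> H)) (at W)"
    and gradg: "\<forall>W. ((\<lambda>V. (\<Sum>n<N. Fn n V) / real N) has_derivative (\<lambda>H. gradFg W \<bullet> H)) (at W)"
    and A1: "\<forall>n<N. \<forall>W1 W2. norm (gradF n W1 - gradF n W2) \<le> L * norm (W1 - W2)"
    and A2_prob: "\<forall>n<N. \<forall>j<J. prob_space (D n j)"
    and A2_meas: "\<forall>n<N. \<forall>j<J. (\<lambda>(W, s). g n W s) \<in> borel_measurable (borel \<Otimes>\<^sub>M D n j)"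
    and A2_int: "\<forall>n<N. \<forall>j<J. \<forall>W. integrable (D n j) (g n W)"
    and A2_unb: "\<forall>n<N. \<forall>j<J. \<forall>W. (\<integral>s. g n W s \<partial>D n j) = gradF n W"
    and A2_var: "\<forall>n<N. \<forall>j<J. \<forall>W.
        (\<integral>\<^sup>+ s. ennreal ((norm (g n W s - gradF n W))\<^sup>2) \<partial>D n j) \<le> ennreal (sigma\<^sup>2)"
    and A3: "\<forall>W. (\<Sum>n<N. (norm (gradF n W))\<^sup>2) / real N \<le> vsig\<^sup>2 + (norm (gradFg W))\<^sup>2"
    and A4_prob: "\<forall>k<K. prob_space (muP k) \<and> sets (muP k) = sets borel"
    and A4_orth: "\<forall>k<K. AE P in muP k.
        P ** transpose P = (real CARD('dn) / real CARD('r)) *\<^sub>R mat 1"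
    and A4_mean: "\<forall>k<K. integrable (muP k) (\<lambda>P. transpose P ** P)
        \<and> (\<integral>P. transpose P ** P \<partial>muP k) = mat 1"
    and W_prob: "prob_space muW" and W_sets: "sets muW = sets borel"
    and eta_pos: "0 < eta"
    and eta_le: "eta \<le> real CARD('r) / (16 * L * real CARD('dn) * real J)"
  shows "ennreal (1 / real N) *
           (\<Sum>n<N. \<Sum>j<J. \<integral>\<^sup>+ \<omega>. ennreal (fedkrso_term eta g n j \<omega>)
               \<partial>round_space muW muP D N K J)
         \<le> ennreal (8 * real J ^ 3 * eta\<^sup>2 * real CARD('dn) / real CARD('r) * vsig\<^sup>2)
           + ennreal (8 * real J ^ 3 * eta\<^sup>2 * real CARD('dn) / real CARD('r))
             * (\<integral>\<^sup>+ \<omega>. ennreal ((norm (gradFg (fst \<omega>)))\<^sup>2) \<partial>round_space muW muP D N K J)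
           + ennreal (4 * real J ^ 2 * real CARD('dn) ^ 2 * eta\<^sup>2 * sigma\<^sup>2 / real CARD('r) ^ 2)"
proof -
  define c where "c = real CARD('dn) / real CARD('r)"
  have c_nn: "0 \<le> c" unfolding c_def by simp
  have Lpos: "0 < L"
  proof (rule ccontr)
    assume "\<not> 0 < L"
    then have "16 * L * real CARD('dn) * real J \<le> 0"
      by (simp add: mult_nonpos_nonneg)
    then have "real CARD('r) / (16 * L * real CARD('dn) * real J) \<le> 0"
      by (simp add: divide_nonneg_nonpos)
    with eta_le eta_pos show False by linarith
  qed
  have small: "eta * c * L \<le> 1 / (16 * real J)"
  proof -
    have pos: "0 < 16 * L * real CARD('dn) * real J" using Lpos J by simp
    have "eta * (16 * L * real CARD('dn) * real J) \<le> real CARD('r)"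
      using eta_le pos by (simp add: le_divide_eq)
    then show ?thesis unfolding c_def using J by (simp add: field_simps)
  qed
  interpret F: fed g D gradF N J L eta sigma c
    using A1 A2_prob A2_meas A2_int A2_unb A2_var eta_pos c_nn J small by unfold_locales auto
  have Xi_eq: "F.Xi = PiM ({..<N} \<times> {..<J}) (\<lambda>(n, j). D n j)"
    unfolding F.Xi_def F.I_def F.Dp_def ..
  define Om where "Om = round_space muW muP D N K J"
  have Om_eq: "Om = muW \<Otimes>\<^sub>M (PiM {..<K} muP \<Otimes>\<^sub>M (PiM {..<N} (\<lambda>_. measure_pmf (pmf_of_set {..<K})) \<Otimes>\<^sub>M F.Xi))"
    unfolding Om_def round_space_def Xi_eq ..
  define r where "r n W = 8 * real J ^ 3 * eta\<^sup>2 * c * (norm (gradF n W))\<^sup>2 + 4 * (real J)\<^sup>2 * eta\<^sup>2 * c\<^sup>2 * sigma\<^sup>2" for n W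
  have r_nn: "0 \<le> r n W" for n W unfolding r_def using c_nn by simp
  have gradF_cont: "continuous_on UNIV (gradF n)" if "n < N" for n
    using A1 that Lpos by (intro lip_cont) auto
  have r_meas: "(\<lambda>W. ennreal (r n W)) \<in> borel_measurable muW" if "n < N" for n
  proof -
    have "(\<lambda>W. ennreal (r n W)) \<in> borel_measurable borel"
      unfolding r_def using gradF_cont[OF that]
      by (intro measurable_compose[OF _ measurable_ennreal] borel_measurable_continuous_onI continuous_intros) auto
    then show ?thesis using W_sets by (rule meas_from_borel)
  qed
  define H where "H n W (P::real^'dn^'r) (x::nat \<times> nat \<Rightarrow> 's) = (\<Sum>j<J. ennreal ((norm (fedkrso_B eta g W P x n j ** P))\<^sup>2))" for n W P x
  have Hm: "(\<lambda>(W, P, x). H n W P x) \<in> borel_measurable (borel \<Otimes>\<^sub>M (borel \<Otimes>\<^sub>M F.Xi))" if n: "n < N" for n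
  proof -
    have "(\<lambda>z. H n (fst z) (fst (snd z)) (snd (snd z))) \<in> borel_measurable (borel \<Otimes>\<^sub>M (borel \<Otimes>\<^sub>M F.Xi))"
      unfolding H_def by (intro borel_measurable_sum F.Hj_meas[OF n]) auto
    then show ?thesis by (simp add: split_beta')
  qed
  have step_n: "(\<Sum>j<J. \<integral>\<^sup>+ \<omega>. ennreal (fedkrso_term eta g n j \<omega>) \<partial>Om) \<le> (\<integral>\<^sup>+ W. ennreal (r n W) \<partial>muW)"
    if n: "n < N" for n
  proof -
    have tm: "(\<lambda>\<omega>. ennreal (fedkrso_term eta g n j \<omega>)) \<in> borel_measurable Om" if j: "j < J" for j
    proof -
      have hm: "(\<lambda>(W, P, x). ennreal ((norm (fedkrso_B eta g W P x n j ** P))\<^sup>2)) \<in> borel_measurable (borel \<Otimes>\<^sub>M (borel \<Otimes>\<^sub>M F.Xi))"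
        using F.Hj_meas[OF n, of j] j by (simp add: split_beta')
      have "(\<lambda>\<omega>. ennreal ((norm (fedkrso_B eta g (fst \<omega>) (fst (snd \<omega>) (fst (snd (snd \<omega>)) n)) (snd (snd (snd \<omega>))) n j ** (fst (snd \<omega>) (fst (snd (snd \<omega>)) n))))\<^sup>2)) \<in> borel_measurable Om"
        unfolding Om_eq using sel_meas[OF W_prob W_sets A4_prob K F.Xi_prob n hm] by simp
      then show ?thesis by (simp add: fedkrso_term_def split_beta')
    qed
    have "(\<Sum>j<J. \<integral>\<^sup>+ \<omega>. ennreal (fedkrso_term eta g n j \<omega>) \<partial>Om) = (\<integral>\<^sup>+ \<omega>. (\<Sum>j<J. ennreal (fedkrso_term eta g n j \<omega>)) \<partial>Om)"
      using tm by (subst nn_integral_sum) auto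
    also have "\<dots> = (\<integral>\<^sup>+ \<omega>. H n (fst \<omega>) (fst (snd \<omega>) (fst (snd (snd \<omega>)) n)) (snd (snd (snd \<omega>))) \<partial>Om)"
      unfolding H_def by (simp add: fedkrso_term_def split_beta')
    also have "\<dots> \<le> (\<integral>\<^sup>+ W. ennreal (r n W) \<partial>muW)"
      unfolding Om_eq
    proof (rule decomp[OF W_prob W_sets A4_prob K F.Xi_prob n Hm[OF n]], intro allI impI)
      fix W k assume k: "k < K"
      have "(\<integral>\<^sup>+ P. \<integral>\<^sup>+ x. H n W P x \<partial>F.Xi \<partial>muP k)
          = (\<integral>\<^sup>+ P. (\<Sum>j<J. \<integral>\<^sup>+ x. ennreal ((norm (fedkrso_B eta g W P x n j ** P))\<^sup>2) \<partial>F.Xi) \<partial>muP k)"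
        unfolding H_def by (intro nn_integral_cong nn_integral_sum F.X_meas[OF n]) auto
      also have "\<dots> \<le> ennreal (r n W)"
        unfolding r_def using A4_prob A4_orth A4_mean k
        by (intro F.P_bound[OF n]) (auto simp: c_def)
      finally show "(\<integral>\<^sup>+ P. \<integral>\<^sup>+ x. H n W P x \<partial>F.Xi \<partial>muP k) \<le> ennreal (r n W)" .
    qed
    finally show ?thesis .
  qed
  define A0 where "A0 = 8 * real J ^ 3 * eta\<^sup>2 * real CARD('dn) / real CARD('r) * vsig\<^sup>2"
  define B0 where "B0 = 8 * real J ^ 3 * eta\<^sup>2 * real CARD('dn) / real CARD('r)"
  define C0 where "C0 = 4 * real J ^ 2 * real CARD('dn) ^ 2 * eta\<^sup>2 * sigma\<^sup>2 / real CARD('r) ^ 2"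
  have A0_nn: "0 \<le> A0" and B0_nn: "0 \<le> B0" and C0_nn: "0 \<le> C0"
    unfolding A0_def B0_def C0_def by auto
  have gradFg_meas: "(\<lambda>W. ennreal ((norm (gradFg W))\<^sup>2)) \<in> borel_measurable muW"
  proof -
    have eq: "gradFg = (\<lambda>W. (1 / real N) *\<^sub>R (\<Sum>n<N. gradF n W))"
      using gradFg_eq[OF grad gradg N] by auto
    have "(\<lambda>W. ennreal ((norm (gradFg W))\<^sup>2)) \<in> borel_measurable borel"
      unfolding eq using gradF_cont
      by (intro measurable_compose[OF _ measurable_ennreal] borel_measurable_continuous_onI continuous_intros) auto
    then show ?thesis using W_sets by (rule meas_from_borel)
  qed
  have pw: "ennreal (1 / real N) * (\<Sum>n<N. ennreal (r n W)) \<le> ennreal A0 + ennreal B0 * ennreal ((norm (gradFg W))\<^sup>2) + ennreal C0" for W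
  proof -
    have "ennreal (1 / real N) * (\<Sum>n<N. ennreal (r n W)) = ennreal (1 / real N * (\<Sum>n<N. r n W))"
      using r_nn by (simp add: ennreal_mult'[symmetric] sum_nonneg)
    also have "\<dots> \<le> ennreal (A0 + B0 * (norm (gradFg W))\<^sup>2 + C0)"
    proof (rule ennreal_leI)
      have "1 / real N * (\<Sum>n<N. r n W)
          = 8 * real J ^ 3 * eta\<^sup>2 * c * ((\<Sum>n<N. (norm (gradF n W))\<^sup>2) / real N) + 4 * (real J)\<^sup>2 * eta\<^sup>2 * c\<^sup>2 * sigma\<^sup>2"
        using N unfolding r_def by (simp add: sum.distrib sum_distrib_left[symmetric] field_simps)
      also have "\<dots> \<le> 8 * real J ^ 3 * eta\<^sup>2 * c * (vsig\<^sup>2 + (norm (gradFg W))\<^sup>2) + 4 * (real J)\<^sup>2 * eta\<^sup>2 * c\<^sup>2 * sigma\<^sup>2"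
        using A3 c_nn by (intro add_right_mono mult_left_mono) auto
      also have "\<dots> = A0 + B0 * (norm (gradFg W))\<^sup>2 + C0"
        unfolding A0_def B0_def C0_def c_def by (simp add: field_simps power2_eq_square)
      finally show "1 / real N * (\<Sum>n<N. r n W) \<le> A0 + B0 * (norm (gradFg W))\<^sup>2 + C0" .
    qed
    also have "\<dots> = ennreal A0 + ennreal B0 * ennreal ((norm (gradFg W))\<^sup>2) + ennreal C0"
      using A0_nn B0_nn C0_nn by (simp add: ennreal_plus ennreal_mult)
    finally show ?thesis .
  qed
  have "ennreal (1 / real N) * (\<Sum>n<N. \<Sum>j<J. \<integral>\<^sup>+ \<omega>. ennreal (fedkrso_term eta g n j \<omega>) \<partial>Om)
      \<le> ennreal (1 / real N) * (\<Sum>n<N. \<integral>\<^sup>+ W. ennreal (r n W) \<partial>muW)"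
    using step_n by (intro mult_left_mono sum_mono) auto
  also have "\<dots> = ennreal (1 / real N) * (\<integral>\<^sup>+ W. (\<Sum>n<N. ennreal (r n W)) \<partial>muW)"
    using r_meas by (subst nn_integral_sum) auto
  also have "\<dots> = (\<integral>\<^sup>+ W. ennreal (1 / real N) * (\<Sum>n<N. ennreal (r n W)) \<partial>muW)"
    using r_meas by (intro nn_integral_cmult[symmetric] borel_measurable_sum) auto
  also have "\<dots> \<le> (\<integral>\<^sup>+ W. ennreal A0 + ennreal B0 * ennreal ((norm (gradFg W))\<^sup>2) + ennreal C0 \<partial>muW)"
    using pw by (intro nn_integral_mono) auto
  also have "\<dots> = ennreal A0 + ennreal B0 * (\<integral>\<^sup>+ W. ennreal ((norm (gradFg W))\<^sup>2) \<partial>muW) + ennreal C0"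
    using gradFg_meas W_prob
    by (simp add: nn_integral_add nn_integral_cmult prob_space.emeasure_space_1)
  also have "(\<integral>\<^sup>+ W. ennreal ((norm (gradFg W))\<^sup>2) \<partial>muW) = (\<integral>\<^sup>+ \<omega>. ennreal ((norm (gradFg (fst \<omega>)))\<^sup>2) \<partial>Om)"
  proof -
    have "prob_space (PiM {..<K} muP \<Otimes>\<^sub>M (PiM {..<N} (\<lambda>_. measure_pmf (pmf_of_set {..<K})) \<Otimes>\<^sub>M F.Xi))"
    proof -
      interpret P1: prob_space "PiM {..<K} muP" using A4_prob by (intro prob_space_PiM) auto
      interpret P2: prob_space "PiM {..<N} (\<lambda>_. measure_pmf (pmf_of_set {..<K}))"
        by (intro prob_space_PiM prob_space_measure_pmf)
      interpret P3: prob_space F.Xi by (rule F.Xi_prob)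
      interpret P23: pair_prob_space "PiM {..<N} (\<lambda>_. measure_pmf (pmf_of_set {..<K}))" F.Xi by unfold_locales
      interpret P123: pair_prob_space "PiM {..<K} muP" "PiM {..<N} (\<lambda>_. measure_pmf (pmf_of_set {..<K})) \<Otimes>\<^sub>M F.Xi" by unfold_locales
      show ?thesis by unfold_locales
    qed
    from marginal[OF this gradFg_meas] show ?thesis unfolding Om_eq by simp
  qed
  finally show ?thesis unfolding Om_def A0_def B0_def C0_def .
qed

end
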